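(* Assume Assumptions A, B and C hold (with constants $L_\phi,G,V>0$), and let $w^{(t)}$, $0\le t\le T$, be generated by Algorithm 1, where $T=\beta/\varepsilon$ for a constant $\beta>0$ (assumed to be an integer). Let $\eta^{(t)}=D\sqrt{\varepsilon}$ for some $D>0$, and let the learning rates be $\alpha_i^{(t)}=(1+\varepsilon)^t\alpha_i^{(0)}$ with $\alpha_i^{(0)}=\frac{\alpha}{e^{\beta}L_\phi}$ for some $\alpha\in(0,\tfrac13)$. Then $$\frac1T\sum_{t=0}^{T-1}[F(w^{(t)})-F_*]\le \frac{e^{\beta}L_\phi(1+\varepsilon)}{2(1-3\alpha)\alpha\beta}\cdot\frac1n\sum_{i=1}^n\|h(w^{(0)};i)-h_i^*\|^2\cdot\varepsilon+\frac{e^{\beta}L_\phi(3\varepsilon+2)}{8\alpha(1-3\alpha)}\Big[c\big(4+(V+2)GD^2\big)^2+8+4V\Big]\cdot\varepsilon.$$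
   Context: Let $n,c,d$ be positive integers and $[n]=\{1,\dots,n\}$. For each $i\in[n]$ let $h(\cdot;i):\mathbb{R}^d\to\mathbb{R}^c$ (components $h_j(\cdot;i)$, $j\in[c]$) and $\phi_i:\mathbb{R}^c\to\mathbb{R}$. Put $f(w;i)=\phi_i(h(w;i))$, $F(w)=\frac1n\sum_{i=1}^n f(w;i)$ and $F_*=\inf_{w\in\mathbb{R}^d}F(w)$. Each $\phi_i$ is assumed to attain its minimum, and $h_i^*\in\arg\min_{z}\phi_i(z)$. Vector norms are Euclidean; matrix norms are operator (spectral) norms. Assumption A: each $\phi_i$ is convex, bounded below, and $L_\phi$-smooth, i.e. $\|\nabla\phi_i(z_1)-\nabla\phi_i(z_2)\|\le L_\phi\|z_1-z_2\|$ for all $z_1,z_2$. Assumption B: each $h(\cdot;i)$ is twice continuously differentiable and there is $G>0$ with $\|\nabla_w^2 h_j(w;i)\|\le G$ for all $w\in\mathbb{R}^d$, $i\in[n]$, $j\in[c]$. Iteration setup: given a tolerance $\varepsilon>0$, step sizes $\eta^{(t)}>0$, learning rates $\alpha_i^{(t)}>0$ and iterates $w^{(t)}$, let $H_i^{(t)}\in\mathbb{R}^{c\times d}$ be the Jacobian of $h(\cdot;i)$ at $w^{(t)}$, let $\Phi^{(t)}(v)=\frac{1}{2n}\sum_{i=1}^n\|\eta^{(t)}H_i^{(t)}v-\alpha_i^{(t)}\nabla\phi_i(h(w^{(t)};i))\|^2$, $\Psi^{(t)}(v)=\Phi^{(t)}(v)+\frac{\varepsilon^2}{2}\|v\|^2$,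 and let $v_{*\mathrm{reg}}^{(t)}$ be the unique minimizer of $\Psi^{(t)}$ over $\mathbb{R}^d$. Algorithm 1: choose $w^{(0)}\in\mathbb{R}^d$; for $t=0,\dots,T-1$ set $v^{(t)}=v_{*\mathrm{reg}}^{(t)}$ and $w^{(t+1)}=w^{(t)}-\eta^{(t)}v^{(t)}$. Assumption C (constant $V>0$): for each $0\le t<T$ there exists $\hat v^{(t)}\in\mathbb{R}^d$ with $\|\hat v^{(t)}\|^2\le V$ and $\Phi^{(t)}(\hat v^{(t)})\le\varepsilon^2$. *)

theory Defs
  imports "HOL-Analysis.Analysis"
begin

text \<open>Assumption B for a single scalar component f = h_j(.;i):
  f is twice continuously differentiable (gradient g, Hessian matrix Hs, continuous),
  and the operator (spectral) norm of the Hessian is at most G everywhere.\<close>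
definition C2_hessian_bounded :: "(real^'d \<Rightarrow> real) \<Rightarrow> real \<Rightarrow> bool" where
  "C2_hessian_bounded f G \<longleftrightarrow>
     (\<exists>(g :: real^'d \<Rightarrow> real^'d) (Hs :: real^'d \<Rightarrow> real^'d^'d).
        (\<forall>w. (f has_derivative (\<lambda>v. g w \<bullet> v)) (at w)) \<and>
        (\<forall>w. (g has_derivative (\<lambda>v. Hs w *v v)) (at w)) \<and>
        continuous_on UNIV Hs \<and>
        (\<forall>w. onorm (\<lambda>v. Hs w *v v) \<le> G))"

definition Phi ::
  "nat \<Rightarrow> (nat \<Rightarrow> real^'d \<Rightarrow> real^'c) \<Rightarrow> (nat \<Rightarrow> real^'d \<Rightarrow> real^'d^'c)
   \<Rightarrow> (nat \<Rightarrow> real^'c \<Rightarrow> real^'c) \<Rightarrow> real^'d \<Rightarrow> real \<Rightarrow> (nat \<Rightarrow> real) \<Rightarrow> real^'d \<Rightarrow> real" where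
  "Phi n h Jh gphi w eta alph v =
     (1 / (2 * real n)) * (\<Sum>i=1..n. (norm (eta *\<^sub>R (Jh i w *v v) - alph i *\<^sub>R gphi i (h i w)))\<^sup>2)"

definition Psi ::
  "nat \<Rightarrow> (nat \<Rightarrow> real^'d \<Rightarrow> real^'c) \<Rightarrow> (nat \<Rightarrow> real^'d \<Rightarrow> real^'d^'c)
   \<Rightarrow> (nat \<Rightarrow> real^'c \<Rightarrow> real^'c) \<Rightarrow> real^'d \<Rightarrow> real \<Rightarrow> (nat \<Rightarrow> real) \<Rightarrow> real \<Rightarrow> real^'d \<Rightarrow> real" where
  "Psi n h Jh gphi w eta alph \<epsilon> v = Phi n h Jh gphi w eta alph v + (\<epsilon>\<^sup>2 / 2) * (norm v)\<^sup>2"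

end

theory Submission
  imports Defs
begin


lemma line_deriv:
  fixes f :: "'a::real_inner \<Rightarrow> real"
  assumes der: "\<And>z. (f has_derivative (\<lambda>u. g z \<bullet> u)) (at z)"
  shows "((\<lambda>s. f (x + s *\<^sub>R d)) has_real_derivative (g (x + s *\<^sub>R d) \<bullet> d)) (at s)"
proof -
  have 1: "((\<lambda>s. x + s *\<^sub>R d) has_derivative (\<lambda>t. t *\<^sub>R d)) (at s)"
    by (auto intro!: derivative_eq_intros)
  have "((f \<circ> (\<lambda>s. x + s *\<^sub>R d)) has_derivative ((\<lambda>u. g (x + s *\<^sub>R d) \<bullet> u) \<circ> (\<lambda>t. t *\<^sub>R d))) (at s)"
    by (rule diff_chain_at[OF 1 der])
  moreover have "((\<lambda>u. g (x + s *\<^sub>R d) \<bullet> u) \<circ> (\<lambda>t. t *\<^sub>R d)) = (*) (g (x + s *\<^sub>R d) \<bullet> d)"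
    by (auto simp: fun_eq_iff)
  ultimately show ?thesis by (simp add: has_field_derivative_def o_def)
qed

lemma taylor_lip:
  fixes f :: "'a::real_inner \<Rightarrow> real"
  assumes der: "\<And>z. (f has_derivative (\<lambda>u. g z \<bullet> u)) (at z)"
   and lip: "\<And>y z. norm (g y - g z) \<le> K * norm (y - z)"
  shows "\<bar>f (x + d) - f x - g x \<bullet> d\<bar> \<le> K/2 * (norm d)^2"
proof -
  have bnd: "\<bar>g (x + s *\<^sub>R d) \<bullet> d - g x \<bullet> d\<bar> \<le> K * s * (norm d)^2" if "0 \<le> s" for s
  proof -
    have "\<bar>g (x + s *\<^sub>R d) \<bullet> d - g x \<bullet> d\<bar> = \<bar>(g (x + s *\<^sub>R d) - g x) \<bullet> d\<bar>"
      by (simp add: inner_diff_left)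
    also have "\<dots> \<le> norm (g (x + s *\<^sub>R d) - g x) * norm d" by (rule Cauchy_Schwarz_ineq2)
    also have "\<dots> \<le> (K * norm (s *\<^sub>R d)) * norm d"
      using lip[of "x + s *\<^sub>R d" x] by (simp add: mult_right_mono)
    also have "\<dots> = K * s * (norm d)^2" using that by (simp add: power2_eq_square)
    finally show ?thesis .
  qed
  define p where "p s = f (x + s *\<^sub>R d) - s * (g x \<bullet> d) - K/2 * s^2 * (norm d)^2" for s
  define q where "q s = f (x + s *\<^sub>R d) - s * (g x \<bullet> d) + K/2 * s^2 * (norm d)^2" for s
  have dp: "(p has_real_derivative (g (x + s *\<^sub>R d) \<bullet> d - g x \<bullet> d - K * s * (norm d)^2)) (at s)" for s
    unfolding p_def
    by (rule derivative_eq_intros line_deriv[OF der] refl | simp)+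
  have dq: "(q has_real_derivative (g (x + s *\<^sub>R d) \<bullet> d - g x \<bullet> d + K * s * (norm d)^2)) (at s)" for s
    unfolding q_def
    by (rule derivative_eq_intros line_deriv[OF der] refl | simp)+
  have "p 1 \<le> p 0"
    by (rule DERIV_nonpos_imp_nonincreasing[of 0 1]) (use dp bnd in force)+
  moreover have "q 0 \<le> q 1"
    by (rule DERIV_nonneg_imp_nondecreasing[of 0 1]) (use dq bnd in force)+
  ultimately show ?thesis unfolding p_def q_def abs_le_iff by simp
qed

lemma grad_sq_bound:
  fixes f :: "'a::real_inner \<Rightarrow> real"
  assumes der: "\<And>z. (f has_derivative (\<lambda>u. g z \<bullet> u)) (at z)"
   and lip: "\<And>y z. norm (g y - g z) \<le> K * norm (y - z)"
   and K: "K > 0" and m: "\<And>z. m \<le> f z"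
  shows "(norm (g x))^2 \<le> 2 * K * (f x - m)"
proof -
  define d where "d = - (1/K) *\<^sub>R g x"
  have "\<bar>f (x + d) - f x - g x \<bullet> d\<bar> \<le> K/2 * (norm d)^2" by (rule taylor_lip[OF der lip])
  moreover have "g x \<bullet> d = -((norm (g x))^2 / K)" by (simp add: d_def power2_norm_eq_inner)
  moreover have "(norm d)^2 = (norm (g x))^2 / K^2" using K by (simp add: d_def power_divide)
  ultimately have "f (x + d) \<le> f x - (norm (g x))^2 / K + K/2 * ((norm (g x))^2 / K^2)" by (simp add: abs_le_iff)
  also have "K/2 * ((norm (g x))^2 / K^2) = (norm (g x))^2 / (2*K)" using K by (simp add: power2_eq_square field_simps)
  finally have "m \<le> f x - (norm (g x))^2 / K + (norm (g x))^2 / (2*K)" using m[of "x+d"] by linarith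
  then show ?thesis using K by (simp add: field_simps)
qed

lemma convex_tangent:
  fixes f :: "'a::real_inner \<Rightarrow> real"
  assumes der: "\<And>z. (f has_derivative (\<lambda>u. g z \<bullet> u)) (at z)"
   and cv: "convex_on UNIV f"
  shows "g x \<bullet> (y - x) \<le> f y - f x"
proof -
  define p where "p s = f (x + s *\<^sub>R (y - x))" for s
  have cp: "convex_on UNIV p"
  proof (rule convex_onI)
    fix t a b :: real assume t: "0 < t" "t < 1"
    have "x + ((1 - t) * a + t * b) *\<^sub>R (y - x) = (1 - t) *\<^sub>R (x + a *\<^sub>R (y - x)) + t *\<^sub>R (x + b *\<^sub>R (y - x))"
      by (simp add: algebra_simps)
    then show "p ((1 - t) *\<^sub>R a + t *\<^sub>R b) \<le> (1 - t) * p a + t * p b"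
      unfolding p_def using convex_onD[OF cv, of t] t by simp
  qed simp
  have "(p has_real_derivative (g (x + 0 *\<^sub>R (y - x)) \<bullet> (y - x))) (at 0)"
    unfolding p_def by (rule line_deriv[OF der])
  then have "p 1 - p 0 \<ge> (g x \<bullet> (y - x)) * (1 - 0)"
    by (intro convex_on_imp_above_tangent[OF cp]) (auto simp: has_field_derivative_at_within)
  then show ?thesis by (simp add: p_def)
qed

lemma step_vec:
  fixes hw hn hs gp u r :: "'a::real_inner"
  assumes hn: "hn = hw - a *\<^sub>R gp - u + r"
   and cvx: "gp \<bullet> (hs - hw) \<le> ps - pw" and sm: "(norm gp)^2 \<le> 2 * L * (pw - ps)"
   and a: "a \<ge> 0" "a * L \<le> \<alpha>" and ps: "ps \<le> pw" and e: "\<epsilon> > 0"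
  shows "(norm (hn - hs))^2 \<le> (1+\<epsilon>)*((norm(hw-hs))^2 - 2*a*(1-\<alpha>)*(pw-ps)) + (1+1/\<epsilon>)*(2*(norm r)^2 + 2*(norm u)^2)"
proof -
  define A where "A = hw - hs - a *\<^sub>R gp"
  define E where "E = r - u"
  have eq: "hn - hs = A + E" by (simp add: hn A_def E_def algebra_simps)
  have n1: "(norm (A + E))^2 = (norm A)^2 + 2 * (A \<bullet> E) + (norm E)^2"
    by (simp add: power2_norm_eq_inner inner_add_left inner_add_right inner_commute)
  have "0 \<le> (norm (\<epsilon> *\<^sub>R A - E))^2" by simp
  also have "\<dots> = \<epsilon>^2 * (norm A)^2 - 2 * \<epsilon> * (A \<bullet> E) + (norm E)^2"
    unfolding power2_norm_eq_inner by (simp add: inner_diff_left inner_diff_right inner_commute power2_eq_square algebra_simps)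
  finally have "2 * \<epsilon> * (A \<bullet> E) \<le> \<epsilon>^2 * (norm A)^2 + (norm E)^2" by linarith
  then have "2 * (A \<bullet> E) \<le> \<epsilon> * (norm A)^2 + (norm E)^2 / \<epsilon>"
    using e by (simp add: field_simps power2_eq_square)
  then have s1: "(norm (A + E))^2 \<le> (1+\<epsilon>) * (norm A)^2 + (1 + 1/\<epsilon>) * (norm E)^2"
    using n1 by (simp add: algebra_simps)
  have "0 \<le> (norm (r + u))^2" by simp
  then have s2: "(norm E)^2 \<le> 2*(norm r)^2 + 2*(norm u)^2"
    by (simp add: E_def power2_norm_eq_inner inner_diff_left inner_diff_right inner_add_left inner_add_right inner_commute)
  have nA: "(norm A)^2 = (norm(hw-hs))^2 + 2 * a * (gp \<bullet> (hs - hw)) + a^2 * (norm gp)^2"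
    unfolding A_def power2_norm_eq_inner by (simp add: inner_diff_left inner_diff_right inner_commute power2_eq_square algebra_simps)
  have "2 * a * (gp \<bullet> (hs - hw)) \<le> 2 * a * (ps - pw)" using cvx a by (simp add: mult_left_mono)
  moreover have "a^2 * (norm gp)^2 \<le> a^2 * (2 * L * (pw - ps))" using sm by (simp add: mult_left_mono)
  moreover have "a^2 * (2 * L * (pw - ps)) \<le> 2 * a * \<alpha> * (pw - ps)"
  proof -
    have "a^2 * (2 * L * (pw - ps)) = 2 * a * (a * L) * (pw - ps)" by (simp add: power2_eq_square)
    also have "\<dots> \<le> 2 * a * \<alpha> * (pw - ps)" using a ps by (intro mult_right_mono mult_left_mono) auto
    finally show ?thesis .
  qed
  ultimately have s3: "(norm A)^2 \<le> (norm(hw-hs))^2 - 2*a*(1-\<alpha>)*(pw-ps)"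
    using nA by (simp add: algebra_simps)
  have "(norm (hn - hs))^2 \<le> (1+\<epsilon>) * (norm A)^2 + (1 + 1/\<epsilon>) * (norm E)^2" using s1 eq by simp
  also have "\<dots> \<le> (1+\<epsilon>)*((norm(hw-hs))^2 - 2*a*(1-\<alpha>)*(pw-ps)) + (1+1/\<epsilon>)*(2*(norm r)^2 + 2*(norm u)^2)"
    using s2 s3 e by (intro add_mono mult_left_mono) auto
  finally show ?thesis .
qed

lemma comp_remainder:
  fixes hf :: "real^'d \<Rightarrow> real^'c" and J :: "real^'d \<Rightarrow> real^'d^'c"
  assumes der: "\<And>x. (hf has_derivative (\<lambda>u. J x *v u)) (at x)"
   and c2: "C2_hessian_bounded (\<lambda>x. hf x $ j) G"
  shows "\<bar>hf (x+d) $ j - hf x $ j - (J x *v d) $ j\<bar> \<le> G/2 * (norm d)^2"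
proof -
  obtain g :: "real^'d \<Rightarrow> real^'d" and Hs :: "real^'d \<Rightarrow> real^'d^'d" where
    gd: "\<And>w. ((\<lambda>x. hf x $ j) has_derivative (\<lambda>v. g w \<bullet> v)) (at w)" and
    Hd: "\<And>w. (g has_derivative (\<lambda>v. Hs w *v v)) (at w)" and
    Hb: "\<And>w. onorm (\<lambda>v. Hs w *v v) \<le> G"
    using c2 unfolding C2_hessian_bounded_def by blast
  have lip: "norm (g y - g z) \<le> G * norm (y - z)" for y z
    by (rule differentiable_bound[of UNIV]) (use Hd Hb in auto)
  have "((\<lambda>x. hf x $ j) has_derivative (\<lambda>u. (J x *v u) $ j)) (at x)"
    using bounded_linear.has_derivative[OF bounded_linear_vec_nth der[of x]] .
  then have "(\<lambda>u. (J x *v u) $ j) = (\<lambda>v. g x \<bullet> v)" using gd[of x] by (rule has_derivative_unique)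
  then have eq: "(J x *v d) $ j = g x \<bullet> d" by metis
  show ?thesis using taylor_lip[OF gd lip, of x d] eq by simp
qed

lemma vec_remainder:
  fixes hf :: "real^'d \<Rightarrow> real^'c" and J :: "real^'d \<Rightarrow> real^'d^'c"
  assumes der: "\<And>x. (hf has_derivative (\<lambda>u. J x *v u)) (at x)"
   and c2: "\<And>j. C2_hessian_bounded (\<lambda>x. hf x $ j) G"
  shows "(norm (hf (x+d) - hf x - J x *v d))^2 \<le> real CARD('c) * (G/2 * (norm d)^2)^2"
proof -
  let ?r = "hf (x+d) - hf x - J x *v d"
  have "(norm ?r)^2 = (\<Sum>j\<in>UNIV. (?r $ j)^2)"
    unfolding power2_norm_eq_inner inner_vec_def by (simp add: power2_eq_square)
  also have "\<dots> \<le> of_nat (card (UNIV::'c set)) * (G/2 * (norm d)^2)^2"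
  proof (rule sum_bounded_above)
    fix j :: 'c
    have "\<bar>?r $ j\<bar> \<le> G/2 * (norm d)^2" using comp_remainder[OF der c2[of j], of x d] by simp
    then show "(?r $ j)^2 \<le> (G/2 * (norm d)^2)^2"
      by (metis abs_ge_zero abs_le_square_iff abs_of_nonneg order_trans power2_abs)
  qed
  finally show ?thesis by simp
qed

lemma telescope:
  fixes S P :: "nat \<Rightarrow> real"
  assumes step: "\<And>t. t < T \<Longrightarrow> S (Suc t) \<le> (1+\<epsilon>)*(S t - 2*((1+\<epsilon>)^t*a0)*(1-\<alpha>)*P t) + (1+1/\<epsilon>)*M"
   and e: "\<epsilon> > 0" and M: "M \<ge> 0"
  shows "m \<le> T \<Longrightarrow> 2*a0*(1-\<alpha>)*(\<Sum>t<m. P t) + S m / (1+\<epsilon>)^m \<le> S 0 + m * (M/\<epsilon>)"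
proof (induction m)
  case 0 then show ?case by simp
next
  case (Suc t)
  then have tT: "t < T" by simp
  define q where "q = (1+\<epsilon>)^t"
  have q: "q \<ge> 1" unfolding q_def using e by (simp add: one_le_power)
  have "S (Suc t) / (1+\<epsilon>)^(Suc t) \<le> ((1+\<epsilon>)*(S t - 2*(q*a0)*(1-\<alpha>)*P t) + (1+1/\<epsilon>)*M) / (q*(1+\<epsilon>))"
    using step[OF tT] e q by (simp add: q_def divide_right_mono mult.commute)
  also have "\<dots> = ((1+\<epsilon>)*(S t - 2*(q*a0)*(1-\<alpha>)*P t + M/\<epsilon>)) / ((1+\<epsilon>)*q)"
    using e by (simp add: field_simps)
  also have "\<dots> = (S t - 2*(q*a0)*(1-\<alpha>)*P t + M/\<epsilon>) / q"
    using e by simp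
  also have "\<dots> = S t / q - 2*a0*(1-\<alpha>)*P t + M/(\<epsilon>*q)"
    using q by (simp add: diff_divide_distrib add_divide_distrib)
  also have "M/(\<epsilon>*q) \<le> M/\<epsilon>"
  proof -
    have "M/(\<epsilon>*q) = (M/\<epsilon>)/q" by simp
    also have "\<dots> \<le> M/\<epsilon>" using q M e by (simp add: divide_le_eq mult_le_cancel_left1 order_trans[OF _ mult_right_mono])
    finally show ?thesis .
  qed
  finally have "S (Suc t) / (1+\<epsilon>)^(Suc t) \<le> S t / q - 2*a0*(1-\<alpha>)*P t + M/\<epsilon>" by simp
  with Suc.IH tT show ?case by (simp add: q_def algebra_simps)
qed


lemma fin_eq: fixes E \<alpha> \<beta> \<epsilon> n S0 K b :: real
  assumes "E>0" "\<alpha>>0" "b>0" "\<beta>>0" "\<epsilon>>0" "n>0"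
  shows "(S0 + (\<beta>/\<epsilon>) * n * \<epsilon> * K)/(2*(\<alpha>/E)*b) / (n*(\<beta>/\<epsilon>)) = (E*\<epsilon>/(2*\<alpha>*\<beta>))*((1/n)*S0)*(1/b) + (E*\<epsilon>/\<alpha>)*(K/(2*b))"
  using assms by (simp add: field_simps)

lemma fin_eq2: fixes E \<alpha> \<beta> \<epsilon> n X B b :: real
  assumes "\<alpha>>0" "b>0" "\<beta>>0" "n>0"
  shows "(E*\<epsilon>/(2*\<alpha>*\<beta>))*((1/n)*X)*((1+\<epsilon>)/b) + (E*\<epsilon>/\<alpha>)*((3*\<epsilon>+2)*B/(8*b))
    = E*(1+\<epsilon>)/(2*b*\<alpha>*\<beta>) * ((1/n)*X) * \<epsilon> + E*(3*\<epsilon>+2)/(8*\<alpha>*b) * B * \<epsilon>"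
  using assms by (simp add: field_simps)

theorem theorem1:
  fixes n :: nat
    and h :: "nat \<Rightarrow> real^'d \<Rightarrow> real^'c"
    and Jh :: "nat \<Rightarrow> real^'d \<Rightarrow> real^'d^'c"
    and \<phi> :: "nat \<Rightarrow> real^'c \<Rightarrow> real"
    and gphi :: "nat \<Rightarrow> real^'c \<Rightarrow> real^'c"
    and hstar :: "nat \<Rightarrow> real^'c"
    and F :: "real^'d \<Rightarrow> real"
    and L\<phi> G V \<epsilon> \<beta> D \<alpha> :: real
    and T :: nat
    and w v :: "nat \<Rightarrow> real^'d"
    and \<eta> :: "nat \<Rightarrow> real"
    and alph :: "nat \<Rightarrow> nat \<Rightarrow> real"
  assumes n_pos: "n \<ge> 1"
    and F_def: "\<And>x. F x = (1 / real n) * (\<Sum>i=1..n. \<phi> i (h i x))"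
    \<comment> \<open>Assumption A\<close>
    and L_pos: "L\<phi> > 0"
    and phi_convex: "\<And>i. i \<in> {1..n} \<Longrightarrow> convex_on UNIV (\<phi> i)"
    and phi_bdd: "\<And>i. i \<in> {1..n} \<Longrightarrow> bdd_below (range (\<phi> i))"
    and phi_grad: "\<And>i z. i \<in> {1..n} \<Longrightarrow> (\<phi> i has_derivative (\<lambda>u. gphi i z \<bullet> u)) (at z)"
    and phi_smooth: "\<And>i z1 z2. i \<in> {1..n} \<Longrightarrow>
                       norm (gphi i z1 - gphi i z2) \<le> L\<phi> * norm (z1 - z2)"
    and hstar_min: "\<And>i z. i \<in> {1..n} \<Longrightarrow> \<phi> i (hstar i) \<le> \<phi> i z"
    \<comment> \<open>Assumption B\<close>
    and G_pos: "G > 0"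
    and h_jac: "\<And>i x. i \<in> {1..n} \<Longrightarrow> (h i has_derivative (\<lambda>u. Jh i x *v u)) (at x)"
    and h_C2: "\<And>i j. i \<in> {1..n} \<Longrightarrow> C2_hessian_bounded (\<lambda>x. h i x $ j) G"
    \<comment> \<open>parameters\<close>
    and eps_pos: "\<epsilon> > 0"
    and beta_pos: "\<beta> > 0"
    and T_def: "real T = \<beta> / \<epsilon>"
    and D_pos: "D > 0"
    and eta_def: "\<And>t. \<eta> t = D * sqrt \<epsilon>"
    and alpha_range: "0 < \<alpha>" "\<alpha> < 1/3"
    and alph_def: "\<And>t i. alph t i = (1 + \<epsilon>) ^ t * (\<alpha> / (exp \<beta> * L\<phi>))"
    \<comment> \<open>Algorithm 1: v t is the (unique) minimiser of Psi^(t), w (t+1) = w t - eta v t\<close>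
    and v_min: "\<And>t u. t < T \<Longrightarrow>
        Psi n h Jh gphi (w t) (\<eta> t) (alph t) \<epsilon> (v t) \<le> Psi n h Jh gphi (w t) (\<eta> t) (alph t) \<epsilon> u"
    and w_step: "\<And>t. t < T \<Longrightarrow> w (Suc t) = w t - \<eta> t *\<^sub>R v t"
    \<comment> \<open>Assumption C\<close>
    and V_pos: "V > 0"
    and assmC: "\<And>t. t < T \<Longrightarrow> \<exists>vh. (norm vh)\<^sup>2 \<le> V \<and> Phi n h Jh gphi (w t) (\<eta> t) (alph t) vh \<le> \<epsilon>\<^sup>2"
  shows "(1 / real T) * (\<Sum>t<T. F (w t) - (INF x. F x))
      \<le> exp \<beta> * L\<phi> * (1 + \<epsilon>) / (2 * (1 - 3 * \<alpha>) * \<alpha> * \<beta>)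
           * ((1 / real n) * (\<Sum>i=1..n. (norm (h i (w 0) - hstar i))\<^sup>2)) * \<epsilon>
       + exp \<beta> * L\<phi> * (3 * \<epsilon> + 2) / (8 * \<alpha> * (1 - 3 * \<alpha>))
           * (real CARD('c) * (4 + (V + 2) * G * D\<^sup>2)\<^sup>2 + 8 + 4 * V) * \<epsilon>"
  proof -
  let ?c = "real CARD('c)"
  define E where "E = exp \<beta> * L\<phi>"
  have Epos: "E > 0" using L_pos by (simp add: E_def)
  define a0 where "a0 = \<alpha> / E"
  have a0pos: "a0 > 0" using Epos alpha_range by (simp add: a0_def)
  have alph_eq: "\<And>t i. alph t i = (1+\<epsilon>)^t * a0" using alph_def L_pos by (simp add: a0_def E_def)
  have npos: "real n > 0" using n_pos by simp
  have TE: "real T * \<epsilon> = \<beta>" using T_def eps_pos by simp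
  have Tpos: "real T > 0" using T_def eps_pos beta_pos by simp
  have alph_L: "(1+\<epsilon>)^t * a0 * L\<phi> \<le> \<alpha>" if "t < T" for t
  proof -
    have "(1+\<epsilon>)^t \<le> exp \<epsilon> ^ t" using eps_pos by (intro power_mono) auto
    also have "\<dots> = exp (real t * \<epsilon>)" by (simp add: exp_of_nat_mult)
    also have "\<dots> \<le> exp (real T * \<epsilon>)" using that eps_pos by simp
    also have "\<dots> = exp \<beta>" using TE by simp
    finally have "(1+\<epsilon>)^t \<le> exp \<beta>" .
    then have "(1+\<epsilon>)^t * a0 * L\<phi> \<le> exp \<beta> * a0 * L\<phi>"
      using a0pos L_pos by (intro mult_right_mono) auto
    also have "exp \<beta> * a0 * L\<phi> = \<alpha>" using Epos L_pos by (simp add: a0_def E_def)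
    finally show ?thesis .
  qed
  define Xi where "Xi t i = (norm (h i (w t) - hstar i))^2" for t i
  define Dl where "Dl t i = \<phi> i (h i (w t)) - \<phi> i (hstar i)" for t i
  define S where "S t = (\<Sum>i=1..n. Xi t i)" for t
  define P where "P t = (\<Sum>i=1..n. Dl t i)" for t
  define X' where "X' = (V+2)*G*D^2"
  define K where "K = ?c * X'^2/2 + 4 + 2*V"
  have Kpos: "K \<ge> 0" using V_pos by (simp add: K_def)
  have step: "S (Suc t) \<le> (1+\<epsilon>)*(S t - 2*((1+\<epsilon>)^t*a0)*(1-\<alpha>)*P t) + (1+1/\<epsilon>)*(real n * \<epsilon>^2 * K)"
    if tT: "t < T" for t
  proof -
    obtain vh where vh: "(norm vh)\<^sup>2 \<le> V" "Phi n h Jh gphi (w t) (\<eta> t) (alph t) vh \<le> \<epsilon>\<^sup>2"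
      using assmC[OF tT] by blast
    let ?Ph = "Phi n h Jh gphi (w t) (\<eta> t) (alph t)"
    have Phnn: "?Ph u \<ge> 0" for u by (simp add: Phi_def sum_nonneg)
    have "Psi n h Jh gphi (w t) (\<eta> t) (alph t) \<epsilon> (v t) \<le> Psi n h Jh gphi (w t) (\<eta> t) (alph t) \<epsilon> vh"
      by (rule v_min[OF tT])
    moreover have "\<epsilon>^2/2 * (norm vh)^2 \<le> \<epsilon>^2/2 * V" using vh(1) by (simp add: mult_left_mono)
    ultimately have pp: "?Ph (v t) + \<epsilon>^2/2 * (norm (v t))^2 \<le> \<epsilon>^2 + \<epsilon>^2/2 * V"
      using vh(2) unfolding Psi_def by linarith
    have e2: "\<epsilon>^2 > 0" using eps_pos by simp
    have "\<epsilon>^2/2 * (norm (v t))^2 \<le> \<epsilon>^2/2 * (2 + V)" using pp Phnn[of "v t"] by (simp add: algebra_simps)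
    then have vn: "(norm (v t))^2 \<le> 2 + V" using e2 by (simp add: mult_le_cancel_left)
    have nn: "0 \<le> \<epsilon>^2/2 * (norm (v t))^2" by simp
    have "\<epsilon>^2 * (1 + V/2) = \<epsilon>^2 + \<epsilon>^2/2 * V" by (simp add: algebra_simps)
    then have phv: "?Ph (v t) \<le> \<epsilon>^2 * (1 + V/2)" using pp nn by linarith
    define a where "a = (1+\<epsilon>)^t * a0"
    have apos: "a \<ge> 0" using a0pos eps_pos by (simp add: a_def)
    have aL: "a * L\<phi> \<le> \<alpha>" using alph_L[OF tT] by (simp add: a_def)
    define d where "d = (- \<eta> t) *\<^sub>R v t"
    have wS: "w (Suc t) = w t + d" using w_step[OF tT] by (simp add: d_def)
    have dn: "(norm d)^2 \<le> D^2*\<epsilon>*(2+V)"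
    proof -
      have "(norm d)^2 = (D * sqrt \<epsilon>)^2 * (norm (v t))^2" by (simp add: d_def eta_def power_mult_distrib)
      also have "\<dots> = D^2 * \<epsilon> * (norm (v t))^2" using eps_pos by (simp add: power_mult_distrib)
      also have "\<dots> \<le> D^2 * \<epsilon> * (2+V)" using vn eps_pos by (intro mult_left_mono) auto
      finally show ?thesis .
    qed
    define U where "U i = \<eta> t *\<^sub>R (Jh i (w t) *v v t) - a *\<^sub>R gphi i (h i (w t))" for i
    define R where "R i = h i (w t + d) - h i (w t) - Jh i (w t) *v d" for i
    have per: "Xi (Suc t) i \<le> (1+\<epsilon>)*(Xi t i - 2*a*(1-\<alpha>)*Dl t i) + (1+1/\<epsilon>)*(2*(norm (R i))^2 + 2*(norm (U i))^2)"
      if i: "i \<in> {1..n}" for i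
      unfolding Xi_def Dl_def wS
    proof (rule step_vec)
      show "h i (w t + d) = h i (w t) - a *\<^sub>R gphi i (h i (w t)) - U i + R i"
      proof -
        have "Jh i (w t) *v d = (- \<eta> t) *\<^sub>R (Jh i (w t) *v v t)"
          unfolding d_def by (rule matrix_vector_mult_scaleR)
        then show ?thesis by (simp add: U_def R_def algebra_simps)
      qed
      show "gphi i (h i (w t)) \<bullet> (hstar i - h i (w t)) \<le> \<phi> i (hstar i) - \<phi> i (h i (w t))"
        by (rule convex_tangent[OF phi_grad[OF i] phi_convex[OF i]])
      show "(norm (gphi i (h i (w t))))^2 \<le> 2 * L\<phi> * (\<phi> i (h i (w t)) - \<phi> i (hstar i))"
        by (rule grad_sq_bound[OF phi_grad[OF i] phi_smooth[OF i] L_pos hstar_min[OF i]])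
    qed (use apos aL hstar_min[OF i] eps_pos in auto)
    have sumR: "(\<Sum>i=1..n. (norm (R i))^2) \<le> real n * (?c * (G/2*(D^2*\<epsilon>*(2+V)))^2)"
    proof -
      have "(\<Sum>i=1..n. (norm (R i))^2) \<le> of_nat (card {1..n}) * (?c * (G/2*(D^2*\<epsilon>*(2+V)))^2)"
      proof (rule sum_bounded_above)
        fix i assume i: "i \<in> {1..n}"
        have "(norm (R i))^2 \<le> ?c * (G/2 * (norm d)^2)^2"
          unfolding R_def by (rule vec_remainder[OF h_jac[OF i] h_C2[OF i]])
        also have "\<dots> \<le> ?c * (G/2*(D^2*\<epsilon>*(2+V)))^2"
          using dn G_pos by (intro mult_left_mono power_mono mult_left_mono) auto
        finally show "(norm (R i))^2 \<le> ?c * (G/2*(D^2*\<epsilon>*(2+V)))^2" .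
      qed
      then show ?thesis by simp
    qed
    have sumU: "(\<Sum>i=1..n. (norm (U i))^2) = 2 * real n * ?Ph (v t)"
      using npos by (simp add: Phi_def U_def alph_eq a_def)
    have "S (Suc t) \<le> (\<Sum>i=1..n. (1+\<epsilon>)*(Xi t i - 2*a*(1-\<alpha>)*Dl t i) + (1+1/\<epsilon>)*(2*(norm (R i))^2 + 2*(norm (U i))^2))"
      unfolding S_def by (rule sum_mono[OF per])
    also have "\<dots> = (1+\<epsilon>)*(S t - 2*a*(1-\<alpha>)*P t) + (1+1/\<epsilon>)*(2*(\<Sum>i=1..n. (norm (R i))^2) + 2*(\<Sum>i=1..n. (norm (U i))^2))"
    proof -
      have e1: "(\<Sum>i=1..n. (1+\<epsilon>)*(Xi t i - 2*a*(1-\<alpha>)*Dl t i)) = (1+\<epsilon>)*(S t - 2*a*(1-\<alpha>)*P t)"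
        by (simp add: S_def P_def sum_distrib_left[symmetric] sum_subtractf)
      have e2: "(\<Sum>i=1..n. (1+1/\<epsilon>)*(2*(norm (R i))^2 + 2*(norm (U i))^2)) = (1+1/\<epsilon>)*(2*(\<Sum>i=1..n. (norm (R i))^2) + 2*(\<Sum>i=1..n. (norm (U i))^2))"
        by (simp add: sum_distrib_left[symmetric] sum.distrib)
      show ?thesis by (simp only: sum.distrib e1 e2)
    qed
    also have "2*(\<Sum>i=1..n. (norm (R i))^2) + 2*(\<Sum>i=1..n. (norm (U i))^2) \<le> real n * \<epsilon>^2 * K"
    proof -
      have "2*(\<Sum>i=1..n. (norm (R i))^2) \<le> 2 * (real n * (?c * (G/2*(D^2*\<epsilon>*(2+V)))^2))"
        using sumR by simp
      also have "\<dots> = real n * \<epsilon>^2 * (?c * X'^2/2)"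
        by (simp add: X'_def power_mult_distrib power2_eq_square algebra_simps)
      finally have A: "2*(\<Sum>i=1..n. (norm (R i))^2) \<le> real n * \<epsilon>^2 * (?c * X'^2/2)" .
      have "2*(\<Sum>i=1..n. (norm (U i))^2) \<le> 4 * real n * (\<epsilon>^2 * (1 + V/2))"
        using sumU phv npos by simp
      also have "\<dots> = real n * \<epsilon>^2 * (4 + 2*V)" by (simp add: algebra_simps)
      finally show ?thesis using A by (simp add: K_def algebra_simps)
    qed
    then have "(1+\<epsilon>)*(S t - 2*a*(1-\<alpha>)*P t) + (1+1/\<epsilon>)*(2*(\<Sum>i=1..n. (norm (R i))^2) + 2*(\<Sum>i=1..n. (norm (U i))^2))
        \<le> (1+\<epsilon>)*(S t - 2*a*(1-\<alpha>)*P t) + (1+1/\<epsilon>)*(real n * \<epsilon>^2 * K)"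
      using eps_pos by (intro add_left_mono mult_left_mono) auto
    finally show ?thesis by (simp add: a_def)
  qed
  have M: "real n * \<epsilon>^2 * K \<ge> 0" using Kpos by simp
  have tel: "2*a0*(1-\<alpha>)*(\<Sum>t<T. P t) + S T / (1+\<epsilon>)^T \<le> S 0 + real T * (real n * \<epsilon>^2 * K/\<epsilon>)"
    by (rule telescope[OF step eps_pos M]) auto
  have "S T / (1+\<epsilon>)^T \<ge> 0" using eps_pos by (simp add: S_def Xi_def sum_nonneg)
  moreover have "real n * \<epsilon>^2 * K/\<epsilon> = real n * \<epsilon> * K" using eps_pos by (simp add: power2_eq_square)
  ultimately have tel2: "2*a0*(1-\<alpha>)*(\<Sum>t<T. P t) \<le> S 0 + real T * real n * \<epsilon> * K"
    using tel by (simp add: algebra_simps)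
  define Fs where "Fs = (1 / real n) * (\<Sum>i=1..n. \<phi> i (hstar i))"
  have FFs: "F x - Fs = (1/real n) * (\<Sum>i=1..n. \<phi> i (h i x) - \<phi> i (hstar i))" for x
    by (simp add: F_def Fs_def sum_subtractf right_diff_distrib)
  have Fge: "Fs \<le> F x" for x
  proof -
    have "0 \<le> (1/real n) * (\<Sum>i=1..n. \<phi> i (h i x) - \<phi> i (hstar i))"
      using hstar_min npos by (intro mult_nonneg_nonneg sum_nonneg) auto
    then show ?thesis using FFs[of x] by simp
  qed
  have INFge: "Fs \<le> (INF x. F x)" by (rule cINF_greatest) (auto intro: Fge)
  have "(\<Sum>t<T. F (w t) - (INF x. F x)) \<le> (\<Sum>t<T. P t / real n)"
  proof (rule sum_mono)
    fix t
    have "F (w t) - (INF x. F x) \<le> F (w t) - Fs" using INFge by simp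
    also have "\<dots> = P t / real n" by (simp add: FFs P_def Dl_def)
    finally show "F (w t) - (INF x. F x) \<le> P t / real n" .
  qed
  also have "\<dots> = (\<Sum>t<T. P t) / real n" by (simp add: sum_divide_distrib)
  finally have L1: "(1 / real T) * (\<Sum>t<T. F (w t) - (INF x. F x)) \<le> (\<Sum>t<T. P t) / (real n * real T)"
    using Tpos by (simp add: divide_right_mono field_simps)
  have al1: "0 < 1 - \<alpha>" "0 < 1 - 3*\<alpha>" using alpha_range by auto
  have "(\<Sum>t<T. P t) \<le> (S 0 + real T * real n * \<epsilon> * K) / (2*a0*(1-\<alpha>))"
    using tel2 a0pos al1 by (simp add: pos_le_divide_eq mult.commute)
  then have "(\<Sum>t<T. P t) / (real n * real T) \<le> (S 0 + real T * real n * \<epsilon> * K) / (2*a0*(1-\<alpha>)) / (real n * real T)"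
    using npos Tpos by (intro divide_right_mono) auto
  also have "\<dots> = (E * \<epsilon> / (2*\<alpha>*\<beta>)) * ((1/real n) * S 0) * (1/(1-\<alpha>)) + (E*\<epsilon>/\<alpha>) * (K / (2*(1-\<alpha>)))"
    unfolding T_def a0_def by (rule fin_eq) (use npos al1 alpha_range Epos beta_pos eps_pos in auto)
  also have "\<dots> \<le> (E * \<epsilon> / (2*\<alpha>*\<beta>)) * ((1/real n) * S 0) * ((1+\<epsilon>)/(1-3*\<alpha>))
       + (E*\<epsilon>/\<alpha>) * ((3*\<epsilon>+2) * (?c * (4 + (V + 2) * G * D\<^sup>2)\<^sup>2 + 8 + 4 * V) / (8*(1-3*\<alpha>)))"
  proof (rule add_mono)
    have "0 \<le> \<epsilon>*(1-\<alpha>)" using al1 eps_pos by simp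
    then have "1-3*\<alpha> \<le> (1+\<epsilon>)*(1-\<alpha>)" using alpha_range by (simp add: algebra_simps)
    then have "1/(1-\<alpha>) \<le> (1+\<epsilon>)/(1-3*\<alpha>)" using al1 eps_pos alpha_range by (simp add: divide_simps)
    moreover have "0 \<le> (E * \<epsilon> / (2*\<alpha>*\<beta>)) * ((1/real n) * S 0)"
      using Epos eps_pos alpha_range beta_pos npos by (simp add: S_def Xi_def sum_nonneg)
    ultimately show "(E * \<epsilon> / (2*\<alpha>*\<beta>)) * ((1/real n) * S 0) * (1/(1-\<alpha>)) \<le> (E * \<epsilon> / (2*\<alpha>*\<beta>)) * ((1/real n) * S 0) * ((1+\<epsilon>)/(1-3*\<alpha>))"
      by (rule mult_left_mono)
  next
    define B where "B = ?c * (4 + (V + 2) * G * D\<^sup>2)\<^sup>2 + 8 + 4 * V"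
    have XX: "X'^2 \<le> (4 + (V + 2) * G * D\<^sup>2)\<^sup>2" unfolding X'_def using V_pos G_pos
      by (intro power_mono) auto
    have KB: "2*K \<le> B" unfolding K_def B_def using XX by (simp add: mult_left_mono)
    have Bpos: "B \<ge> 0" unfolding B_def using V_pos by simp
    have "K / (2*(1-\<alpha>)) = (2*K) / (4*(1-\<alpha>))" using al1 by (simp add: field_simps)
    also have "\<dots> \<le> B / (4*(1-\<alpha>))" using KB al1 by (intro divide_right_mono) auto
    also have "\<dots> \<le> 2 * B / (8*(1-3*\<alpha>))"
    proof -
      have m: "B*(8-24*\<alpha>) \<le> B*(8-8*\<alpha>)" using Bpos alpha_range by (intro mult_left_mono) auto
      have q: "2 * B * (4 - 4 * \<alpha>) = B*(8-8*\<alpha>)" by (simp add: algebra_simps)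
      have "B * (8 - 24 * \<alpha>) \<le> 2 * B * (4 - 4 * \<alpha>)" using m q by linarith
      then show ?thesis using al1 by (simp add: divide_simps)
    qed
    also have "\<dots> \<le> (3*\<epsilon>+2) * B / (8*(1-3*\<alpha>))" using Bpos al1 eps_pos
      by (intro divide_right_mono mult_right_mono) auto
    finally have "K / (2*(1-\<alpha>)) \<le> (3*\<epsilon>+2) * B / (8*(1-3*\<alpha>))" .
    moreover have "0 \<le> E*\<epsilon>/\<alpha>" using Epos eps_pos alpha_range by simp
    ultimately show "(E*\<epsilon>/\<alpha>) * (K / (2*(1-\<alpha>))) \<le> (E*\<epsilon>/\<alpha>) * ((3*\<epsilon>+2) * (?c * (4 + (V + 2) * G * D\<^sup>2)\<^sup>2 + 8 + 4 * V) / (8*(1-3*\<alpha>)))"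
      unfolding B_def by (rule mult_left_mono)
  qed
  also have "\<dots> = exp \<beta> * L\<phi> * (1 + \<epsilon>) / (2 * (1 - 3 * \<alpha>) * \<alpha> * \<beta>)
           * ((1 / real n) * (\<Sum>i=1..n. (norm (h i (w 0) - hstar i))\<^sup>2)) * \<epsilon>
       + exp \<beta> * L\<phi> * (3 * \<epsilon> + 2) / (8 * \<alpha> * (1 - 3 * \<alpha>))
           * (real CARD('c) * (4 + (V + 2) * G * D\<^sup>2)\<^sup>2 + 8 + 4 * V) * \<epsilon>"
    unfolding E_def S_def Xi_def by (rule fin_eq2) (use al1 alpha_range beta_pos npos in auto)
  finally show ?thesis using L1 by linarith
qed

end
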